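(* Let $a>0$ and let $L_2=a\mathbb{Z}^3\cup a(\mathbb{Z}+\tfrac12)^3\cup W$. The Voronoi cell of the origin with respect to $L_2$ is the tetrakis hexahedron $$\operatorname{conv}\Big(\{(\pm\tfrac{5a}{24},\pm\tfrac{5a}{24},\pm\tfrac{5a}{24})\}\cup\{(\pm\tfrac{5a}{16},0,0),(0,\pm\tfrac{5a}{16},0),(0,0,\pm\tfrac{5a}{16})\}\Big).$$ This is the cube $[-5a/24,5a/24]^3$ with a square pyramid of height $5a/48$ glued onto each of its six faces. Its volume is $$V^{(2)}_\Gamma=\frac{125}{1152}a^3 .$$ The same holds, after translation, for the Voronoi cell of every point of $a\mathbb{Z}^3\cup a(\mathbb{Z}+\tfrac12)^3$ with respect to $L_2$.
   Context: Fix $a>0$. $W\subset\mathbb{R}^3$ is the set of all points $a(u_1,u_2,u_3)$ such that $(u_1,u_2,u_3)$ is a permutation of a triple $(i,\ j+\tfrac12,\ k+\varepsilon)$ with $i,j,k\in\mathbb{Z}$ and $\varepsilon\in\{\tfrac14,\tfrac34\}$. For a discrete set $P\subset\mathbb{R}^3$ and $p\in P$, the Voronoi cell of $p$ with respect to $P$ is $\{x\in\mathbb{R}^3: |x-p|\le|x-q|\ \text{for all } q\in P\}$. *)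

theory Defs
  imports "HOL-Analysis.Analysis"
begin

definition pt3 :: "real \<Rightarrow> real \<Rightarrow> real \<Rightarrow> real^3" where
  "pt3 x y z = vector [x, y, z]"

definition voronoi_cell :: "(real^3) set \<Rightarrow> real^3 \<Rightarrow> (real^3) set" where
  "voronoi_cell P p = {x. \<forall>q\<in>P. dist x p \<le> dist x q}"

definition cubic_lattice :: "real \<Rightarrow> (real^3) set" where
  "cubic_lattice a = {a *\<^sub>R pt3 (of_int i) (of_int j) (of_int k) | i j k. True}"

definition shifted_lattice :: "real \<Rightarrow> (real^3) set" where
  "shifted_lattice a =
     {a *\<^sub>R pt3 (of_int i + 1/2) (of_int j + 1/2) (of_int k + 1/2) | i j k. True}"

definition W_set :: "real \<Rightarrow> (real^3) set" where
  "W_set a = {a *\<^sub>R pt3 u1 u2 u3 | u1 u2 u3. \<exists>(i::int) (j::int) (k::int) (e::real).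
      e \<in> {1/4, 3/4} \<and>
      (let x = of_int i; y = of_int j + 1/2; z = of_int k + e in
        (u1, u2, u3) \<in> {(x,y,z), (x,z,y), (y,x,z), (y,z,x), (z,x,y), (z,y,x)})}"

definition L2 :: "real \<Rightarrow> (real^3) set" where
  "L2 a = cubic_lattice a \<union> shifted_lattice a \<union> W_set a"

definition cube_vertices :: "real \<Rightarrow> (real^3) set" where
  "cube_vertices a = {pt3 (s1 * (5*a/24)) (s2 * (5*a/24)) (s3 * (5*a/24)) | s1 s2 s3.
      s1 \<in> {-1, 1} \<and> s2 \<in> {-1, 1} \<and> s3 \<in> {-1, 1}}"

definition apex_vertices :: "real \<Rightarrow> (real^3) set" where
  "apex_vertices a = {pt3 (5*a/16) 0 0, pt3 (-(5*a/16)) 0 0,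
                      pt3 0 (5*a/16) 0, pt3 0 (-(5*a/16)) 0,
                      pt3 0 0 (5*a/16), pt3 0 0 (-(5*a/16))}"

definition tetrakis :: "real \<Rightarrow> (real^3) set" where
  "tetrakis a = convex hull (cube_vertices a \<union> apex_vertices a)"

definition central_cube :: "real \<Rightarrow> (real^3) set" where
  "central_cube a = {x. \<forall>i. \<bar>x $ i\<bar> \<le> 5*a/24}"

text \<open>Square pyramid over the face of the cube facing apex c: the convex hull of c
  and the four cube vertices v with v \<bullet> c > 0 (i.e. the vertices of that face).
  The apex lies at distance 5a/16 - 5a/24 = 5a/48 from the face.\<close>
definition pyramid :: "real \<Rightarrow> real^3 \<Rightarrow> (real^3) set" where
  "pyramid a c = convex hull (insert c {v \<in> cube_vertices a. v \<bullet> c > 0})"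

end

theory Submission
  imports Defs
begin

lemma pt3_nth [simp]: "pt3 x y z $ 1 = x" "pt3 x y z $ 2 = y" "pt3 x y z $ 3 = z"
  by (simp_all add: pt3_def)

lemma pt3_eq: "v = pt3 (v$1) (v$2) (v$3)"
  by (simp add: vec_eq_iff forall_3)

lemma pt3_inject [simp]: "pt3 x y z = pt3 x' y' z' \<longleftrightarrow> x = x' \<and> y = y' \<and> z = z'"
  by (auto simp: vec_eq_iff forall_3)

lemma pt3_scale [simp]: "c *\<^sub>R pt3 x y z = pt3 (c*x) (c*y) (c*z)"
  by (simp add: vec_eq_iff forall_3)

lemma pt3_add [simp]: "pt3 x y z + pt3 x' y' z' = pt3 (x+x') (y+y') (z+z')"
  by (simp add: vec_eq_iff forall_3)

lemma pt3_diff [simp]: "pt3 x y z - pt3 x' y' z' = pt3 (x-x') (y-y') (z-z')"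
  by (simp add: vec_eq_iff forall_3)

lemma pt3_zero: "(0::real^3) = pt3 0 0 0"
  by (simp add: vec_eq_iff forall_3)

lemma inner_pt3 [simp]: "pt3 x y z \<bullet> pt3 x' y' z' = x*x' + y*y' + z*z'"
  by (simp add: inner_vec_def sum_3)

lemma inner_3: "(u::real^3) \<bullet> v = u$1 * v$1 + u$2 * v$2 + u$3 * v$3"
  by (simp add: inner_vec_def sum_3)

definition II :: "real \<Rightarrow> bool" where "II t \<longleftrightarrow> t \<in> \<int>"
definition HH :: "real \<Rightarrow> bool" where "HH t \<longleftrightarrow> t - 1/2 \<in> \<int>"
definition QQ :: "real \<Rightarrow> bool" where "QQ t \<longleftrightarrow> t - 1/4 \<in> \<int> \<or> t - 3/4 \<in> \<int>"

definition PW :: "real \<Rightarrow> real \<Rightarrow> real \<Rightarrow> bool" where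
  "PW u1 u2 u3 \<longleftrightarrow> (II u1 \<and> HH u2 \<and> QQ u3) \<or> (II u1 \<and> QQ u2 \<and> HH u3) \<or> (HH u1 \<and> II u2 \<and> QQ u3)
     \<or> (HH u1 \<and> QQ u2 \<and> II u3) \<or> (QQ u1 \<and> II u2 \<and> HH u3) \<or> (QQ u1 \<and> HH u2 \<and> II u3)"

definition TT :: "real \<Rightarrow> real \<Rightarrow> real \<Rightarrow> bool" where
  "TT u1 u2 u3 \<longleftrightarrow> (II u1 \<and> II u2 \<and> II u3) \<or> (HH u1 \<and> HH u2 \<and> HH u3) \<or> PW u1 u2 u3"

lemma II_ex: "II t \<Longrightarrow> \<exists>i. t = of_int i"
  by (auto simp: II_def elim: Ints_cases)
lemma HH_ex: "HH t \<Longrightarrow> \<exists>j. t = of_int j + 1/2"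
  by (auto simp: HH_def elim!: Ints_cases) (metis add_diff_cancel_right' diff_add_cancel)
lemma QQ_ex: "QQ t \<Longrightarrow> \<exists>k e. e \<in> {1/4, 3/4} \<and> t = of_int k + e"
  unfolding QQ_def
  by (elim disjE Ints_cases) (metis diff_add_cancel insertCI)+

lemma II_of [simp]: "II (of_int i)" by (simp add: II_def)
lemma HH_of [simp]: "HH (of_int j + 1/2)" by (simp add: HH_def)
lemma QQ_of1: "QQ (of_int k + 1/4)" by (simp add: QQ_def)
lemma QQ_of3: "QQ (of_int k + 3/4)" by (simp add: QQ_def)
lemma QQ_of: "e \<in> {1/4, 3/4} \<Longrightarrow> QQ (of_int k + e)" using QQ_of1 QQ_of3 by blast

lemma W_char: "W_set a = {a *\<^sub>R pt3 u1 u2 u3 | u1 u2 u3. PW u1 u2 u3}"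
proof -
  have "(\<exists>(i::int) (j::int) (k::int) (e::real). e \<in> {1/4, 3/4} \<and>
      (let x = of_int i; y = of_int j + 1/2; z = of_int k + e in
        (u1, u2, u3) \<in> {(x,y,z), (x,z,y), (y,x,z), (y,z,x), (z,x,y), (z,y,x)})) \<longleftrightarrow> PW u1 u2 u3"
    for u1 u2 u3
  proof
    assume "\<exists>(i::int) (j::int) (k::int) (e::real). e \<in> {1/4, 3/4} \<and>
      (let x = of_int i; y = of_int j + 1/2; z = of_int k + e in
        (u1, u2, u3) \<in> {(x,y,z), (x,z,y), (y,x,z), (y,z,x), (z,x,y), (z,y,x)})"
    then obtain i j k e where e: "e \<in> {1/4, 3/4}" and
      m: "(u1, u2, u3) \<in> {(of_int i, of_int j + 1/2, of_int k + e), (of_int i, of_int k + e, of_int j + 1/2),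
          (of_int j + 1/2, of_int i, of_int k + e), (of_int j + 1/2, of_int k + e, of_int i),
          (of_int k + e, of_int i, of_int j + 1/2), (of_int k + e, of_int j + 1/2, of_int i)}"
      by (auto simp: Let_def)
    have q: "QQ (of_int k + e)" using e by (rule QQ_of)
    from m q show "PW u1 u2 u3"
      by (simp only: insert_iff empty_iff prod.inject) (elim disjE conjE; simp add: PW_def)
  next
    assume "PW u1 u2 u3"
    then show "\<exists>(i::int) (j::int) (k::int) (e::real). e \<in> {1/4, 3/4} \<and>
      (let x = of_int i; y = of_int j + 1/2; z = of_int k + e in
        (u1, u2, u3) \<in> {(x,y,z), (x,z,y), (y,x,z), (y,z,x), (z,x,y), (z,y,x)})"
    proof -
      have wit: "\<exists>i j k e. e\<in>{1/4,3/4} \<and> x = real_of_int i \<and> y = real_of_int j + 1/2 \<and> z = real_of_int k + e"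
        if "II x" "HH y" "QQ z" for x y z
        using II_ex[OF that(1)] HH_ex[OF that(2)] QQ_ex[OF that(3)] by blast
      from \<open>PW u1 u2 u3\<close> show ?thesis
        unfolding PW_def
      proof (elim disjE conjE)
        assume "II u1" "HH u2" "QQ u3"
        then obtain i j k e where "e\<in>{1/4,3/4}" "u1 = real_of_int i" "u2 = real_of_int j + 1/2" "u3 = real_of_int k + e"
          using wit by blast
        then show ?thesis by (intro exI[of _ i] exI[of _ j] exI[of _ k] exI[of _ e]) (simp add: Let_def)
      next
        assume "II u1" "QQ u2" "HH u3"
        then obtain i j k e where "e\<in>{1/4,3/4}" "u1 = real_of_int i" "u3 = real_of_int j + 1/2" "u2 = real_of_int k + e"
          using wit by blast
        then show ?thesis by (intro exI[of _ i] exI[of _ j] exI[of _ k] exI[of _ e]) (simp add: Let_def)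
      next
        assume "HH u1" "II u2" "QQ u3"
        then obtain i j k e where "e\<in>{1/4,3/4}" "u2 = real_of_int i" "u1 = real_of_int j + 1/2" "u3 = real_of_int k + e"
          using wit by blast
        then show ?thesis by (intro exI[of _ i] exI[of _ j] exI[of _ k] exI[of _ e]) (simp add: Let_def)
      next
        assume "HH u1" "QQ u2" "II u3"
        then obtain i j k e where "e\<in>{1/4,3/4}" "u3 = real_of_int i" "u1 = real_of_int j + 1/2" "u2 = real_of_int k + e"
          using wit by blast
        then show ?thesis by (intro exI[of _ i] exI[of _ j] exI[of _ k] exI[of _ e]) (simp add: Let_def)
      next
        assume "QQ u1" "II u2" "HH u3"
        then obtain i j k e where "e\<in>{1/4,3/4}" "u2 = real_of_int i" "u3 = real_of_int j + 1/2" "u1 = real_of_int k + e"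
          using wit by blast
        then show ?thesis by (intro exI[of _ i] exI[of _ j] exI[of _ k] exI[of _ e]) (simp add: Let_def)
      next
        assume "QQ u1" "HH u2" "II u3"
        then obtain i j k e where "e\<in>{1/4,3/4}" "u3 = real_of_int i" "u2 = real_of_int j + 1/2" "u1 = real_of_int k + e"
          using wit by blast
        then show ?thesis by (intro exI[of _ i] exI[of _ j] exI[of _ k] exI[of _ e]) (simp add: Let_def)
      qed
    qed
  qed
  then show ?thesis unfolding W_set_def by simp
qed

lemma cubic_char: "cubic_lattice a = {a *\<^sub>R pt3 u1 u2 u3 | u1 u2 u3. II u1 \<and> II u2 \<and> II u3}"
  unfolding cubic_lattice_def
proof (intro set_eqI iffI)
  fix x assume "x \<in> {a *\<^sub>R pt3 u1 u2 u3 | u1 u2 u3. II u1 \<and> II u2 \<and> II u3}"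
  then obtain u1 u2 u3 where "x = a *\<^sub>R pt3 u1 u2 u3" "II u1" "II u2" "II u3" by blast
  moreover from this obtain i j k where "u1 = of_int i" "u2 = of_int j" "u3 = of_int k"
    using II_ex by metis
  ultimately show "x \<in> {a *\<^sub>R pt3 (of_int i) (of_int j) (of_int k) | i j k. True}" by blast
qed (use II_of in blast)

lemma shifted_char: "shifted_lattice a = {a *\<^sub>R pt3 u1 u2 u3 | u1 u2 u3. HH u1 \<and> HH u2 \<and> HH u3}"
  unfolding shifted_lattice_def
proof (intro set_eqI iffI)
  fix x assume "x \<in> {a *\<^sub>R pt3 u1 u2 u3 | u1 u2 u3. HH u1 \<and> HH u2 \<and> HH u3}"
  then obtain u1 u2 u3 where "x = a *\<^sub>R pt3 u1 u2 u3" "HH u1" "HH u2" "HH u3" by blast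
  moreover from this obtain i j k where "u1 = of_int i + 1/2" "u2 = of_int j + 1/2" "u3 = of_int k + 1/2"
    using HH_ex by metis
  ultimately show "x \<in> {a *\<^sub>R pt3 (of_int i + 1/2) (of_int j + 1/2) (of_int k + 1/2) | i j k. True}" by blast
qed (use HH_of in blast)

lemma L2_char: "L2 a = {a *\<^sub>R pt3 u1 u2 u3 | u1 u2 u3. TT u1 u2 u3}"
  unfolding L2_def cubic_char shifted_char W_char TT_def by blast

lemma Ints_eq: "x \<in> \<int> \<Longrightarrow> x = y \<Longrightarrow> y \<in> \<int>" by simp

lemma II_add: "II a \<Longrightarrow> II b \<Longrightarrow> II (a+b)" by (simp add: II_def)
lemma II_sub: "II a \<Longrightarrow> II b \<Longrightarrow> II (a-b)" by (simp add: II_def)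
lemma HI_add: "HH a \<Longrightarrow> II b \<Longrightarrow> HH (a+b)"
  unfolding HH_def II_def by (rule Ints_eq[OF Ints_add, of "a-1/2" b]) auto
lemma HI_sub: "HH a \<Longrightarrow> II b \<Longrightarrow> HH (a-b)"
  unfolding HH_def II_def by (rule Ints_eq[OF Ints_diff, of "a-1/2" b]) auto
lemma IH_add: "II a \<Longrightarrow> HH b \<Longrightarrow> HH (a+b)"
  unfolding HH_def II_def by (rule Ints_eq[OF Ints_add, of a "b-1/2"]) auto
lemma IH_sub: "II a \<Longrightarrow> HH b \<Longrightarrow> HH (a-b)"
  unfolding HH_def II_def by (rule Ints_eq[OF Ints_diff[OF Ints_diff Ints_1], of a "b-1/2"]) auto
lemma HH_add: "HH a \<Longrightarrow> HH b \<Longrightarrow> II (a+b)"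
  unfolding HH_def II_def by (rule Ints_eq[OF Ints_add[OF Ints_add Ints_1], of "a-1/2" "b-1/2"]) auto
lemma HH_sub: "HH a \<Longrightarrow> HH b \<Longrightarrow> II (a-b)"
  unfolding HH_def II_def by (rule Ints_eq[OF Ints_diff, of "a-1/2" "b-1/2"]) auto
lemma QI_add: "QQ a \<Longrightarrow> II b \<Longrightarrow> QQ (a+b)"
  unfolding QQ_def II_def
proof (elim disjE)
  assume "a - 1/4 \<in> \<int>" "b \<in> \<int>"
  then have "a + b - 1/4 \<in> \<int>" by (rule Ints_eq[OF Ints_add]) simp
  then show "a + b - 1/4 \<in> \<int> \<or> a + b - 3/4 \<in> \<int>" ..
next
  assume "a - 3/4 \<in> \<int>" "b \<in> \<int>"
  then have "a + b - 3/4 \<in> \<int>" by (rule Ints_eq[OF Ints_add]) simp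
  then show "a + b - 1/4 \<in> \<int> \<or> a + b - 3/4 \<in> \<int>" ..
qed
lemma QI_sub: "QQ a \<Longrightarrow> II b \<Longrightarrow> QQ (a-b)"
  unfolding QQ_def II_def
proof (elim disjE)
  assume "a - 1/4 \<in> \<int>" "b \<in> \<int>"
  then have "a - b - 1/4 \<in> \<int>" by (rule Ints_eq[OF Ints_diff]) simp
  then show "a - b - 1/4 \<in> \<int> \<or> a - b - 3/4 \<in> \<int>" ..
next
  assume "a - 3/4 \<in> \<int>" "b \<in> \<int>"
  then have "a - b - 3/4 \<in> \<int>" by (rule Ints_eq[OF Ints_diff]) simp
  then show "a - b - 1/4 \<in> \<int> \<or> a - b - 3/4 \<in> \<int>" ..
qed
lemma QH_add: "QQ a \<Longrightarrow> HH b \<Longrightarrow> QQ (a+b)"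
  unfolding QQ_def HH_def
proof (elim disjE)
  assume "a - 1/4 \<in> \<int>" "b - 1/2 \<in> \<int>"
  then have "a + b - 3/4 \<in> \<int>" by (rule Ints_eq[OF Ints_add]) simp
  then show "a + b - 1/4 \<in> \<int> \<or> a + b - 3/4 \<in> \<int>" ..
next
  assume "a - 3/4 \<in> \<int>" "b - 1/2 \<in> \<int>"
  then have "a + b - 1/4 \<in> \<int>" by (rule Ints_eq[OF Ints_add[OF Ints_add Ints_1]]) simp
  then show "a + b - 1/4 \<in> \<int> \<or> a + b - 3/4 \<in> \<int>" ..
qed
lemma QH_sub: "QQ a \<Longrightarrow> HH b \<Longrightarrow> QQ (a-b)"
  unfolding QQ_def HH_def
proof (elim disjE)
  assume "a - 1/4 \<in> \<int>" "b - 1/2 \<in> \<int>"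
  then have "a - b - 3/4 \<in> \<int>" by (rule Ints_eq[OF Ints_diff[OF Ints_diff Ints_1]]) simp
  then show "a - b - 1/4 \<in> \<int> \<or> a - b - 3/4 \<in> \<int>" ..
next
  assume "a - 3/4 \<in> \<int>" "b - 1/2 \<in> \<int>"
  then have "a - b - 1/4 \<in> \<int>" by (rule Ints_eq[OF Ints_diff]) simp
  then show "a - b - 1/4 \<in> \<int> \<or> a - b - 3/4 \<in> \<int>" ..
qed

lemma cls_I:
  assumes "II b"
  shows "II (a+b) \<longleftrightarrow> II a" "HH (a+b) \<longleftrightarrow> HH a" "QQ (a+b) \<longleftrightarrow> QQ a"
        "II (a-b) \<longleftrightarrow> II a" "HH (a-b) \<longleftrightarrow> HH a" "QQ (a-b) \<longleftrightarrow> QQ a"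
  using II_add[OF _ assms] II_sub[OF _ assms] HI_add[OF _ assms] HI_sub[OF _ assms]
    QI_add[OF _ assms] QI_sub[OF _ assms]
  by (metis add_diff_cancel diff_add_cancel)+

lemma cls_H:
  assumes "HH b"
  shows "II (a+b) \<longleftrightarrow> HH a" "HH (a+b) \<longleftrightarrow> II a" "QQ (a+b) \<longleftrightarrow> QQ a"
        "II (a-b) \<longleftrightarrow> HH a" "HH (a-b) \<longleftrightarrow> II a" "QQ (a-b) \<longleftrightarrow> QQ a"
  using HH_add[OF _ assms] HH_sub[OF _ assms] IH_add[OF _ assms] IH_sub[OF _ assms]
    QH_add[OF _ assms] QH_sub[OF _ assms]
  by (metis add_diff_cancel diff_add_cancel)+

lemma TT_shift0:
  assumes "(II v1 \<and> II v2 \<and> II v3) \<or> (HH v1 \<and> HH v2 \<and> HH v3)" "TT u1 u2 u3"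
  shows "TT (u1+v1) (u2+v2) (u3+v3) \<and> TT (u1-v1) (u2-v2) (u3-v3)"
  using assms(1)
proof (elim disjE conjE)
  assume "II v1" "II v2" "II v3"
  then show ?thesis
    using assms(2) by (simp only: TT_def PW_def cls_I)
next
  assume "HH v1" "HH v2" "HH v3"
  then show ?thesis
    using assms(2) unfolding TT_def PW_def by (simp only: cls_H) blast
qed

lemma TT_shift:
  assumes "(II v1 \<and> II v2 \<and> II v3) \<or> (HH v1 \<and> HH v2 \<and> HH v3)" "TT u1 u2 u3"
  shows "TT (u1+v1) (u2+v2) (u3+v3)" "TT (u1-v1) (u2-v2) (u3-v3)"
  using TT_shift0[OF assms] by auto


lemma II_abs: "II t \<Longrightarrow> t = 0 \<or> \<bar>t\<bar> \<ge> 1"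
  unfolding II_def by (elim Ints_cases) auto

lemma HH_abs: "HH t \<Longrightarrow> \<bar>t\<bar> \<ge> 1/2"
proof -
  assume "HH t"
  then obtain j where j: "t = of_int j + 1/2" using HH_ex by blast
  show ?thesis
  proof (cases "j \<ge> 0")
    case True then have "real_of_int j \<ge> 0" by simp
    then show ?thesis using j by simp
  next
    case False then have "real_of_int j \<le> -1" by simp
    then show ?thesis using j by simp
  qed
qed

lemma QQ_abs: "QQ t \<Longrightarrow> \<bar>t\<bar> = 1/4 \<or> \<bar>t\<bar> \<ge> 3/4"
proof -
  assume "QQ t"
  then obtain k e where e: "e \<in> {1/4,3/4}" and k: "t = of_int k + e" using QQ_ex by blast
  consider "k \<ge> 1" | "k = 0" | "k = -1" | "k \<le> -2" by linarith
  then show ?thesis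
  proof cases
    case 1 then have "real_of_int k \<ge> 1" by simp
    then show ?thesis using e k by auto
  next
    case 2 then show ?thesis using e k by auto
  next
    case 3 then show ?thesis using e k by auto
  next
    case 4 then have "real_of_int k \<le> -2" by simp
    then show ?thesis using e k by auto
  qed
qed

lemma ct_le: "c * t \<le> \<bar>c\<bar> * \<bar>t\<bar>" for c t :: real
  by (metis abs_ge_self abs_mult)

lemma sq_abs: "t^2 = \<bar>t\<bar> * \<bar>t\<bar>" for t :: real
  by (simp add: power2_eq_square abs_mult_self_eq)

lemma L_I: assumes "II t" "\<bar>c\<bar> \<le> 1/2" shows "t^2 - 2*c*t \<ge> 0"
proof (cases "t = 0")
  case False
  then have T: "\<bar>t\<bar> \<ge> 1" using II_abs[OF assms(1)] by auto
  have "\<bar>t\<bar> * (\<bar>t\<bar> - 2*\<bar>c\<bar>) \<ge> 0" using T assms(2) by (intro mult_nonneg_nonneg) auto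
  then show ?thesis using ct_le[of c t] sq_abs[of t] by (simp add: algebra_simps)
qed simp

lemma L_H: assumes "HH t" "\<bar>c\<bar> \<le> 1/2" shows "t^2 - 2*c*t \<ge> 1/4 - \<bar>c\<bar>"
proof -
  have T: "\<bar>t\<bar> \<ge> 1/2" using HH_abs[OF assms(1)] .
  have "(\<bar>t\<bar> - 1/2) * (\<bar>t\<bar> + 1/2 - 2*\<bar>c\<bar>) \<ge> 0" using T assms(2) by (intro mult_nonneg_nonneg) auto
  then show ?thesis using ct_le[of c t] sq_abs[of t] by (simp add: algebra_simps)
qed

lemma L_Q: assumes "QQ t" "\<bar>c\<bar> \<le> 1/2" shows "t^2 - 2*c*t \<ge> 1/16 - \<bar>c\<bar>/2"
proof -
  consider "\<bar>t\<bar> = 1/4" | "\<bar>t\<bar> \<ge> 3/4" using QQ_abs[OF assms(1)] by blast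
  then show ?thesis
  proof cases
    case 1
    have "\<bar>t\<bar> * \<bar>t\<bar> = 1/16" "\<bar>c\<bar> * \<bar>t\<bar> = \<bar>c\<bar>/4" by (simp_all only: 1)
    then show ?thesis using ct_le[of c t] sq_abs[of t] by linarith
  next
    case 2
    have "(\<bar>t\<bar> - 1/4) * (\<bar>t\<bar> + 1/4 - 2*\<bar>c\<bar>) \<ge> 0" using 2 assms(2) by (intro mult_nonneg_nonneg) auto
    then show ?thesis using ct_le[of c t] sq_abs[of t] by (simp add: algebra_simps)
  qed
qed

lemma key_ineq:
  assumes T: "TT u1 u2 u3"
    and c: "\<bar>c1\<bar> \<le> 1/2" "\<bar>c2\<bar> \<le> 1/2" "\<bar>c3\<bar> \<le> 1/2"
    and s: "\<bar>c1\<bar> + \<bar>c2\<bar> + \<bar>c3\<bar> \<le> 3/4"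
    and p: "\<bar>c1\<bar> + \<bar>c2\<bar>/2 \<le> 5/16" "\<bar>c1\<bar> + \<bar>c3\<bar>/2 \<le> 5/16"
       "\<bar>c2\<bar> + \<bar>c1\<bar>/2 \<le> 5/16" "\<bar>c2\<bar> + \<bar>c3\<bar>/2 \<le> 5/16"
       "\<bar>c3\<bar> + \<bar>c1\<bar>/2 \<le> 5/16" "\<bar>c3\<bar> + \<bar>c2\<bar>/2 \<le> 5/16"
  shows "(u1^2 - 2*c1*u1) + (u2^2 - 2*c2*u2) + (u3^2 - 2*c3*u3) \<ge> 0"
proof -
  have I1: "II u1 \<Longrightarrow> u1^2 - 2*c1*u1 \<ge> 0" using L_I[OF _ c(1)] .
  have I2: "II u2 \<Longrightarrow> u2^2 - 2*c2*u2 \<ge> 0" using L_I[OF _ c(2)] .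
  have I3: "II u3 \<Longrightarrow> u3^2 - 2*c3*u3 \<ge> 0" using L_I[OF _ c(3)] .
  have H1: "HH u1 \<Longrightarrow> u1^2 - 2*c1*u1 \<ge> 1/4 - \<bar>c1\<bar>" using L_H[OF _ c(1)] .
  have H2: "HH u2 \<Longrightarrow> u2^2 - 2*c2*u2 \<ge> 1/4 - \<bar>c2\<bar>" using L_H[OF _ c(2)] .
  have H3: "HH u3 \<Longrightarrow> u3^2 - 2*c3*u3 \<ge> 1/4 - \<bar>c3\<bar>" using L_H[OF _ c(3)] .
  have Q1: "QQ u1 \<Longrightarrow> u1^2 - 2*c1*u1 \<ge> 1/16 - \<bar>c1\<bar>/2" using L_Q[OF _ c(1)] .
  have Q2: "QQ u2 \<Longrightarrow> u2^2 - 2*c2*u2 \<ge> 1/16 - \<bar>c2\<bar>/2" using L_Q[OF _ c(2)] .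
  have Q3: "QQ u3 \<Longrightarrow> u3^2 - 2*c3*u3 \<ge> 1/16 - \<bar>c3\<bar>/2" using L_Q[OF _ c(3)] .
  show ?thesis
    using T unfolding TT_def PW_def
  proof (elim disjE conjE)
    assume "II u1" "II u2" "II u3" then show ?thesis using I1 I2 I3 by fastforce
  next
    assume "HH u1" "HH u2" "HH u3" then show ?thesis using H1 H2 H3 s by fastforce
  next
    assume "II u1" "HH u2" "QQ u3" then show ?thesis using I1 H2 Q3 p by fastforce
  next
    assume "II u1" "QQ u2" "HH u3" then show ?thesis using I1 Q2 H3 p by fastforce
  next
    assume "HH u1" "II u2" "QQ u3" then show ?thesis using H1 I2 Q3 p by fastforce
  next
    assume "HH u1" "QQ u2" "II u3" then show ?thesis using H1 Q2 I3 p by fastforce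
  next
    assume "QQ u1" "II u2" "HH u3" then show ?thesis using Q1 I2 H3 p by fastforce
  next
    assume "QQ u1" "HH u2" "II u3" then show ?thesis using Q1 H2 I3 p by fastforce
  qed
qed

lemma dist0_le_iff: "dist x 0 \<le> dist x q \<longleftrightarrow> 2 * (q \<bullet> x) \<le> q \<bullet> q" for x q :: "real^3"
proof -
  have "dist x 0 \<le> dist x q \<longleftrightarrow> x \<bullet> x \<le> (x - q) \<bullet> (x - q)"
    by (simp add: dist_norm norm_le)
  also have "(x - q) \<bullet> (x - q) = x \<bullet> x - 2 * (q \<bullet> x) + q \<bullet> q"
    by (simp add: inner_diff inner_commute)
  finally show ?thesis by linarith
qed

lemma norm_le_dist_iff: "norm x \<le> dist x q \<longleftrightarrow> 2 * (q \<bullet> x) \<le> q \<bullet> q" for x q :: "real^3"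
  using dist0_le_iff[of x q] by simp

lemma cell0_eq: "voronoi_cell P 0 = (\<Inter>q\<in>P. {x. q \<bullet> x \<le> (q \<bullet> q)/2})"
  unfolding voronoi_cell_def by (auto simp: norm_le_dist_iff mult.commute)

lemma convex_cell0: "convex (voronoi_cell P 0)"
  unfolding cell0_eq by (intro convex_INT convex_halfspace_le)

lemma vert_ok:
  assumes c: "\<bar>c1\<bar> \<le> 1/2" "\<bar>c2\<bar> \<le> 1/2" "\<bar>c3\<bar> \<le> 1/2"
    and s: "\<bar>c1\<bar> + \<bar>c2\<bar> + \<bar>c3\<bar> \<le> 3/4"
    and p: "\<bar>c1\<bar> + \<bar>c2\<bar>/2 \<le> 5/16" "\<bar>c1\<bar> + \<bar>c3\<bar>/2 \<le> 5/16"
       "\<bar>c2\<bar> + \<bar>c1\<bar>/2 \<le> 5/16" "\<bar>c2\<bar> + \<bar>c3\<bar>/2 \<le> 5/16"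
       "\<bar>c3\<bar> + \<bar>c1\<bar>/2 \<le> 5/16" "\<bar>c3\<bar> + \<bar>c2\<bar>/2 \<le> 5/16"
  shows "pt3 (a*c1) (a*c2) (a*c3) \<in> voronoi_cell (L2 a) 0"
  unfolding voronoi_cell_def
proof (intro CollectI ballI)
  fix q assume "q \<in> L2 a"
  then obtain u1 u2 u3 where q: "q = a *\<^sub>R pt3 u1 u2 u3" and T: "TT u1 u2 u3"
    unfolding L2_char by blast
  have k: "(u1^2 - 2*c1*u1) + (u2^2 - 2*c2*u2) + (u3^2 - 2*c3*u3) \<ge> 0"
    by (rule key_ineq[OF T c s p])
  have "a^2 * ((u1^2 - 2*c1*u1) + (u2^2 - 2*c2*u2) + (u3^2 - 2*c3*u3)) \<ge> 0"
    using k by simp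
  then have "2 * (q \<bullet> pt3 (a*c1) (a*c2) (a*c3)) \<le> q \<bullet> q"
    unfolding q by (simp add: algebra_simps power2_eq_square)
  then show "dist (pt3 (a*c1) (a*c2) (a*c3)) 0 \<le> dist (pt3 (a*c1) (a*c2) (a*c3)) q"
    by (simp add: norm_le_dist_iff)
qed

lemma cell_bound:
  assumes x: "x \<in> voronoi_cell (L2 a) 0" and a: "a > 0" and T: "TT u1 u2 u3"
  shows "2 * (x$1*u1 + x$2*u2 + x$3*u3) \<le> a * (u1^2 + u2^2 + u3^2)"
proof -
  have "a *\<^sub>R pt3 u1 u2 u3 \<in> L2 a" unfolding L2_char using T by blast
  then have "2 * ((a *\<^sub>R pt3 u1 u2 u3) \<bullet> x) \<le> (a *\<^sub>R pt3 u1 u2 u3) \<bullet> (a *\<^sub>R pt3 u1 u2 u3)"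
    using x unfolding voronoi_cell_def by (auto simp: norm_le_dist_iff)
  then have "a * (2 * (x$1*u1 + x$2*u2 + x$3*u3)) \<le> a * (a * (u1^2 + u2^2 + u3^2))"
    by (simp add: inner_3 algebra_simps power2_eq_square)
  then show ?thesis using a by simp
qed

definition Hp :: "real \<Rightarrow> (real^3) set" where
  "Hp a = {x. \<forall>i j. i \<noteq> j \<longrightarrow> 2*\<bar>x$i\<bar> + \<bar>x$j\<bar> \<le> 5*a/8}"

lemma pair_bound:
  fixes xi xj B :: real
  assumes "2*xi + xj \<le> B" "2*xi - xj \<le> B" "-2*xi + xj \<le> B" "-2*xi - xj \<le> B"
  shows "2*\<bar>xi\<bar> + \<bar>xj\<bar> \<le> B"
  using assms by (cases "xi \<ge> 0"; cases "xj \<ge> 0") auto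

lemma TT_test:
  "TT (1/2) (1/4) 0" "TT (1/2) (-1/4) 0" "TT (-1/2) (1/4) 0" "TT (-1/2) (-1/4) 0"
  "TT (1/2) 0 (1/4)" "TT (1/2) 0 (-1/4)" "TT (-1/2) 0 (1/4)" "TT (-1/2) 0 (-1/4)"
  "TT (1/4) (1/2) 0" "TT (1/4) (-1/2) 0" "TT (-1/4) (1/2) 0" "TT (-1/4) (-1/2) 0"
  "TT 0 (1/2) (1/4)" "TT 0 (1/2) (-1/4)" "TT 0 (-1/2) (1/4)" "TT 0 (-1/2) (-1/4)"
  "TT (1/4) 0 (1/2)" "TT (1/4) 0 (-1/2)" "TT (-1/4) 0 (1/2)" "TT (-1/4) 0 (-1/2)"
  "TT 0 (1/4) (1/2)" "TT 0 (1/4) (-1/2)" "TT 0 (-1/4) (1/2)" "TT 0 (-1/4) (-1/2)"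
  by (simp_all add: TT_def PW_def II_def HH_def QQ_def)

lemma cell_sub_Hp:
  assumes a: "a > 0" shows "voronoi_cell (L2 a) 0 \<subseteq> Hp a"
proof
  fix x assume x: "x \<in> voronoi_cell (L2 a) 0"
  note cb = cell_bound[OF x a]
  have "2*\<bar>x$1\<bar> + \<bar>x$2\<bar> \<le> 5*a/8"
    using cb[OF TT_test(1)] cb[OF TT_test(2)] cb[OF TT_test(3)] cb[OF TT_test(4)]
    by (intro pair_bound) (simp_all add: power2_eq_square)
  moreover have "2*\<bar>x$1\<bar> + \<bar>x$3\<bar> \<le> 5*a/8"
    using cb[OF TT_test(5)] cb[OF TT_test(6)] cb[OF TT_test(7)] cb[OF TT_test(8)]
    by (intro pair_bound) (simp_all add: power2_eq_square)
  moreover have "2*\<bar>x$2\<bar> + \<bar>x$1\<bar> \<le> 5*a/8"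
    using cb[OF TT_test(9)] cb[OF TT_test(10)] cb[OF TT_test(11)] cb[OF TT_test(12)]
    by (intro pair_bound) (simp_all add: power2_eq_square)
  moreover have "2*\<bar>x$2\<bar> + \<bar>x$3\<bar> \<le> 5*a/8"
    using cb[OF TT_test(13)] cb[OF TT_test(14)] cb[OF TT_test(15)] cb[OF TT_test(16)]
    by (intro pair_bound) (simp_all add: power2_eq_square)
  moreover have "2*\<bar>x$3\<bar> + \<bar>x$1\<bar> \<le> 5*a/8"
    using cb[OF TT_test(17)] cb[OF TT_test(18)] cb[OF TT_test(19)] cb[OF TT_test(20)]
    by (intro pair_bound) (simp_all add: power2_eq_square)
  moreover have "2*\<bar>x$3\<bar> + \<bar>x$2\<bar> \<le> 5*a/8"
    using cb[OF TT_test(21)] cb[OF TT_test(22)] cb[OF TT_test(23)] cb[OF TT_test(24)]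
    by (intro pair_bound) (simp_all add: power2_eq_square)
  ultimately show "x \<in> Hp a" unfolding Hp_def
    by (auto simp: forall_3)
qed

lemma cube_vert_cell:
  assumes "v \<in> cube_vertices a" shows "v \<in> voronoi_cell (L2 a) 0"
proof -
  obtain s1 s2 s3 where v: "v = pt3 (s1*(5*a/24)) (s2*(5*a/24)) (s3*(5*a/24))"
    and s: "s1 \<in> {-1,1}" "s2 \<in> {-1,1}" "s3 \<in> {-1,1}"
    using assms unfolding cube_vertices_def by blast
  have "pt3 (a*(s1*5/24)) (a*(s2*5/24)) (a*(s3*5/24)) \<in> voronoi_cell (L2 a) 0"
    by (rule vert_ok) (use s in auto)
  then show ?thesis unfolding v by (simp add: algebra_simps)
qed

lemma apex_vert_cell:
  assumes "v \<in> apex_vertices a" shows "v \<in> voronoi_cell (L2 a) 0"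
proof -
  have 1: "pt3 (a*c1) (a*c2) (a*c3) \<in> voronoi_cell (L2 a) 0"
    if "c1 \<in> {0, 5/16, -5/16}" "c2 \<in> {0, 5/16, -5/16}" "c3 \<in> {0, 5/16, -5/16}"
       "(c1 = 0 \<and> c2 = 0) \<or> (c1 = 0 \<and> c3 = 0) \<or> (c2 = 0 \<and> c3 = 0)" for c1 c2 c3
    by (rule vert_ok) (use that in auto)
  show ?thesis using assms unfolding apex_vertices_def
    using 1[of "5/16" 0 0] 1[of "-5/16" 0 0] 1[of 0 "5/16" 0] 1[of 0 "-5/16" 0]
      1[of 0 0 "5/16"] 1[of 0 0 "-5/16"]
    by (auto simp: algebra_simps)
qed

lemma tetrakis_sub_cell: "tetrakis a \<subseteq> voronoi_cell (L2 a) 0"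
  unfolding tetrakis_def
  by (rule hull_minimal) (use cube_vert_cell apex_vert_cell convex_cell0 in auto)

definition tr :: "3 \<Rightarrow> 3 \<Rightarrow> 3" where "tr j i = (if i = 1 then j else if i = j then 1 else i)"

lemma tr_tr [simp]: "tr j (tr j i) = i" by (simp add: tr_def)

lemma tr_test: "tr 2 3 = 3" "tr 3 2 = 2" "tr 2 1 = 2" "tr 3 3 = 1" by (simp_all add: tr_def)


definition sig :: "3 \<Rightarrow> real \<Rightarrow> real^3 \<Rightarrow> real^3" where "sig j s x = (\<chi> i. s * x $ tr j i)"

lemma sig_nth [simp]: "sig j s x $ i = s * x $ tr j i" by (simp add: sig_def)

lemma sig_sig: "\<bar>s\<bar> = 1 \<Longrightarrow> sig j s (sig j s x) = x"
  by (auto simp: vec_eq_iff abs_if split: if_splits)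

lemma linear_sig: "linear (sig j s)"
  by (rule linearI) (simp_all add: vec_eq_iff algebra_simps)

lemma tr_cases: "(j = 1 \<and> tr j = id) \<or> (j = 2 \<and> tr j = (\<lambda>i. if i = 1 then 2 else if i = 2 then 1 else 3))
   \<or> (j = 3 \<and> tr j = (\<lambda>i. if i = 1 then 3 else if i = 3 then 1 else 2))"
  using exhaust_3[of j] by (auto simp: tr_def fun_eq_iff) (metis exhaust_3)+

lemma sig_inner: "\<bar>s\<bar> = 1 \<Longrightarrow> sig j s v \<bullet> sig j s w = v \<bullet> w"
proof -
  assume s: "\<bar>s\<bar> = 1"
  then have ss: "s * s = 1" by (metis abs_mult_self_eq mult_1)
  have "sig j s v \<bullet> sig j s w = s * s*(v$(tr j 1) * w$(tr j 1) + v$(tr j 2) * w$(tr j 2) + v$(tr j 3) * w$(tr j 3))"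
    by (simp add: inner_3 algebra_simps)
  also have "\<dots> = v \<bullet> w" using tr_cases[of j] ss by (auto simp: inner_3)
  finally show ?thesis .
qed

lemma orth_sig: "\<bar>s\<bar> = 1 \<Longrightarrow> orthogonal_transformation (sig j s)"
  unfolding orthogonal_transformation_def using linear_sig sig_inner by blast

lemma tr_inj: "tr j i = tr j i' \<longleftrightarrow> i = i'" by (metis tr_tr)

lemma abs_sig [simp]: "\<bar>s\<bar> = 1 \<Longrightarrow> \<bar>sig j s x $ i\<bar> = \<bar>x $ tr j i\<bar>"
  by (simp add: abs_mult)

lemma Hp_sig: assumes "\<bar>s\<bar> = 1" "x \<in> Hp a" shows "sig j s x \<in> Hp a"
  using assms unfolding Hp_def by (auto simp: tr_inj abs_mult)

lemma CV_char: assumes "a > 0" shows "cube_vertices a = {v. \<forall>i. \<bar>v$i\<bar> = 5*a/24}"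
proof (intro set_eqI iffI)
  fix v :: "real^3" assume "v \<in> cube_vertices a"
  then show "v \<in> {v. \<forall>i. \<bar>v$i\<bar> = 5*a/24}" using assms
    unfolding cube_vertices_def by (auto simp: forall_3 abs_mult)
next
  fix v :: "real^3" assume v: "v \<in> {v. \<forall>i. \<bar>v$i\<bar> = 5*a/24}"
  define b where "b = 5*a/24"
  have b: "b > 0" using assms by (simp add: b_def)
  have e: "\<exists>s\<in>{-1,1}. v$i = s * b" for i
  proof -
    have "\<bar>v$i\<bar> = b" using v unfolding b_def by simp
    then show ?thesis by (cases "v$i \<ge> 0") auto
  qed
  obtain s1 s2 s3 where h: "s1 \<in> {-1,1}" "s2 \<in> {-1,1}" "s3 \<in> {-1,1}"
    "v$1 = s1 * b" "v$2 = s2 * b" "v$3 = s3 * b" using e[of 1] e[of 2] e[of 3] by blast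
  have "v = pt3 (s1 * (5*a/24)) (s2 * (5*a/24)) (s3 * (5*a/24))" using pt3_eq[of v] h unfolding b_def by simp
  then show "v \<in> cube_vertices a" using h(1-3) unfolding cube_vertices_def by blast
qed

lemma CV_sig: assumes "a > 0" "\<bar>s\<bar> = 1" "v \<in> cube_vertices a" shows "sig j s v \<in> cube_vertices a"
  using assms by (simp add: CV_char abs_mult)

lemma seg_pt3:
  assumes "convex S" "pt3 x1 y1 z1 \<in> S" "pt3 x2 y2 z2 \<in> S" "0 \<le> u" "u \<le> 1"
  shows "pt3 ((1-u)*x1+u*x2) ((1-u)*y1+u*y2) ((1-u)*z1+u*z2) \<in> S"
  using convexD[OF assms(1) assms(2) assms(3), of "1-u" u] assms(4,5) by simp

lemma interp: fixes x b :: real assumes "b > 0" "\<bar>x\<bar> \<le> b" shows "\<exists>u. 0 \<le> u \<and> u \<le> 1 \<and> x = (1-u)*(-b) + u*b"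
proof (intro exI conjI)
  show "0 \<le> (x+b)/(2*b)" "(x+b)/(2*b) \<le> 1" using assms by (auto simp: field_simps)
  show "x = (1 - (x+b)/(2*b))*(-b) + (x+b)/(2*b)*b" using assms by (simp add: field_simps)
qed

lemma seg1: assumes "convex S" "b > 0" "\<bar>x\<bar> \<le> b" "pt3 (-b) y z \<in> S" "pt3 b y z \<in> S" shows "pt3 x y z \<in> S"
proof -
  obtain u where u: "0 \<le> u" "u \<le> 1" "x = (1-u)*(-b) + u*b" using interp[OF assms(2,3)] by blast
  have "pt3 x y z = pt3 ((1-u)*(-b)+u*b) ((1-u)*y+u*y) ((1-u)*z+u*z)" using u by (simp add: algebra_simps)
  then show ?thesis using seg_pt3[OF assms(1,4,5) u(1,2)] by simp
qed

lemma seg2: assumes "convex S" "b > 0" "\<bar>y\<bar> \<le> b" "pt3 x (-b) z \<in> S" "pt3 x b z \<in> S" shows "pt3 x y z \<in> S"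
proof -
  obtain u where u: "0 \<le> u" "u \<le> 1" "y = (1-u)*(-b) + u*b" using interp[OF assms(2,3)] by blast
  have "pt3 x y z = pt3 ((1-u)*x+u*x) ((1-u)*(-b)+u*b) ((1-u)*z+u*z)" using u by (simp add: algebra_simps)
  then show ?thesis using seg_pt3[OF assms(1,4,5) u(1,2)] by simp
qed

lemma seg3: assumes "convex S" "b > 0" "\<bar>z\<bar> \<le> b" "pt3 x y (-b) \<in> S" "pt3 x y b \<in> S" shows "pt3 x y z \<in> S"
proof -
  obtain u where u: "0 \<le> u" "u \<le> 1" "z = (1-u)*(-b) + u*b" using interp[OF assms(2,3)] by blast
  have "pt3 x y z = pt3 ((1-u)*x+u*x) ((1-u)*y+u*y) ((1-u)*(-b)+u*b)" using u by (simp add: algebra_simps)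
  then show ?thesis using seg_pt3[OF assms(1,4,5) u(1,2)] by simp
qed

lemma cube_sub_hull:
  assumes a: "a > 0" shows "central_cube a \<subseteq> convex hull (cube_vertices a)"
proof
  fix x assume x: "x \<in> central_cube a"
  define b where "b = 5*a/24"
  have b: "b > 0" using a by (simp add: b_def)
  let ?S = "convex hull (cube_vertices a)"
  have cv: "convex ?S" by simp
  have V: "pt3 y1 y2 y3 \<in> ?S" if "y1 \<in> {-b,b}" "y2 \<in> {-b,b}" "y3 \<in> {-b,b}" for y1 y2 y3
  proof -
    have "pt3 y1 y2 y3 \<in> cube_vertices a" using that b unfolding CV_char[OF a] b_def by (auto simp: forall_3)
    then show ?thesis by (rule hull_inc)
  qed
  have x1: "\<bar>x$1\<bar> \<le> b" "\<bar>x$2\<bar> \<le> b" "\<bar>x$3\<bar> \<le> b" using x unfolding central_cube_def b_def by auto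
  have 3: "pt3 y1 y2 (x$3) \<in> ?S" if "y1 \<in> {-b,b}" "y2 \<in> {-b,b}" for y1 y2
    by (rule seg3[OF cv b x1(3)]) (use V that in auto)
  have 2: "pt3 y1 (x$2) (x$3) \<in> ?S" if "y1 \<in> {-b,b}" for y1
    by (rule seg2[OF cv b x1(2)]) (use 3 that in auto)
  have "pt3 (x$1) (x$2) (x$3) \<in> ?S"
    by (rule seg1[OF cv b x1(1)]) (use 2 in auto)
  then show "x \<in> ?S" using pt3_eq[of x] by simp
qed

lemma pyr1:
  assumes a: "a > 0" and y: "y \<in> Hp a" and y1: "y$1 \<ge> 5*a/24"
  shows "y \<in> pyramid a (pt3 (5*a/16) 0 0)"
proof -
  define b where "b = 5*a/24"
  have b: "b > 0" using a by (simp add: b_def)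
  have c1: "pt3 (5*a/16) 0 0 = pt3 (3*b/2) 0 0" by (simp add: b_def)
  let ?S = "pyramid a (pt3 (5*a/16) 0 0)"
  have cv: "convex ?S" unfolding pyramid_def by simp
  have C: "pt3 (3*b/2) 0 0 \<in> ?S" unfolding pyramid_def c1 by (rule hull_inc) simp
  have V: "pt3 b y2 y3 \<in> ?S" if "y2 \<in> {-b,b}" "y3 \<in> {-b,b}" for y2 y3
  proof -
    have "pt3 b y2 y3 \<in> cube_vertices a" using that b unfolding CV_char[OF a] b_def by (auto simp: forall_3)
    moreover have "pt3 b y2 y3 \<bullet> pt3 (5*a/16) 0 0 > 0" using a by (simp add: b_def)
    ultimately show ?thesis unfolding pyramid_def by (intro hull_inc) simp
  qed
  have h: "\<forall>i j. i \<noteq> j \<longrightarrow> 2*\<bar>y$i\<bar> + \<bar>y$j\<bar> \<le> 3*b" using y unfolding Hp_def b_def by simp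
  have h2: "2*y$1 + \<bar>y$2\<bar> \<le> 3*b" "2*y$1 + \<bar>y$3\<bar> \<le> 3*b"
    using h[rule_format, of 1 2] h[rule_format, of 1 3] y1 b unfolding b_def by auto
  have yb: "y$1 \<ge> b" using y1 by (simp add: b_def)
  show ?thesis
  proof (cases "y$1 = 3*b/2")
    case True
    then have "y$2 = 0" "y$3 = 0" using h2 by auto
    then have "y = pt3 (3*b/2) 0 0" using True pt3_eq[of y] by (simp only:)
    then show ?thesis using C by simp
  next
    case False
    then have lt: "y$1 < 3*b/2" using h2 by auto
    define t where "t = (2*y$1 - 2*b)/b"
    have t0: "0 \<le> t" "t \<le> 1" using yb lt b by (auto simp: t_def field_simps)
    have omt: "1 - t = (3*b - 2*y$1)/b" using b by (simp add: t_def field_simps)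
    have omt0: "1 - t > 0" using lt b by (simp add: omt field_simps)
    define w2 where "w2 = y$2/(1-t)"
    define w3 where "w3 = y$3/(1-t)"
    have bt: "b * (1-t) = 3*b - 2*y$1" using b by (simp add: omt)
    have w2: "\<bar>w2\<bar> \<le> b"
    proof -
      have "\<bar>w2\<bar> = \<bar>y$2\<bar> / (1-t)" using omt0 by (simp add: w2_def abs_divide)
      also have "\<dots> \<le> b" using omt0 h2(1) bt by (simp add: divide_le_eq)
      finally show ?thesis .
    qed
    have w3: "\<bar>w3\<bar> \<le> b"
    proof -
      have "\<bar>w3\<bar> = \<bar>y$3\<bar> / (1-t)" using omt0 by (simp add: w3_def abs_divide)
      also have "\<dots> \<le> b" using omt0 h2(2) bt by (simp add: divide_le_eq)
      finally show ?thesis .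
    qed
    have z: "pt3 b w2 w3 \<in> ?S"
      by (rule seg3[OF cv b w3]; rule seg2[OF cv b w2]) (use V in auto)
    have "pt3 ((1-t)*b+t*(3*b/2)) ((1-t)*w2+t*0) ((1-t)*w3+t*0) \<in> ?S"
      by (rule seg_pt3[OF cv z C t0])
    moreover have "(1-t)*b+t*(3*b/2) = y$1" using b by (simp add: t_def field_simps)
    moreover have "(1-t)*w2+t*0 = y$2" "(1-t)*w3+t*0 = y$3" using omt0 by (simp_all add: w2_def w3_def)
    ultimately show ?thesis using pt3_eq[of y] by simp
  qed
qed

lemma sig_c1: assumes "s \<in> {-1,1}" shows "sig j s (pt3 (5*a/16) 0 0) \<in> apex_vertices a"
proof -
  consider "j = 1" | "j = 2" | "j = 3" using exhaust_3 by blast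
  then show ?thesis
  proof cases
    case 1
    then have "sig j s (pt3 (5*a/16) 0 0) = pt3 (s*(5*a/16)) 0 0" by (simp add: vec_eq_iff forall_3 tr_def)
    then show ?thesis using assms unfolding apex_vertices_def by auto
  next
    case 2
    then have "sig j s (pt3 (5*a/16) 0 0) = pt3 0 (s*(5*a/16)) 0" by (simp add: vec_eq_iff forall_3 tr_def)
    then show ?thesis using assms unfolding apex_vertices_def by auto
  next
    case 3
    then have "sig j s (pt3 (5*a/16) 0 0) = pt3 0 0 (s*(5*a/16))" by (simp add: vec_eq_iff forall_3 tr_def)
    then show ?thesis using assms unfolding apex_vertices_def by auto
  qed
qed

lemma pyr_sig:
  assumes a: "a > 0" and s: "\<bar>s\<bar> = 1"
  shows "sig j s ` pyramid a c \<subseteq> pyramid a (sig j s c)"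
proof -
  have "sig j s ` pyramid a c = convex hull (sig j s ` insert c {v \<in> cube_vertices a. v \<bullet> c > 0})"
    unfolding pyramid_def by (rule convex_hull_linear_image[OF linear_sig])
  also have "\<dots> \<subseteq> pyramid a (sig j s c)" unfolding pyramid_def
    by (rule hull_mono) (auto simp: CV_sig[OF a s] sig_inner[OF s])
  finally show ?thesis .
qed

lemma Hp_sub_union:
  assumes a: "a > 0"
  shows "Hp a \<subseteq> central_cube a \<union> (\<Union>c\<in>apex_vertices a. pyramid a c)"
proof
  fix x assume x: "x \<in> Hp a"
  show "x \<in> central_cube a \<union> (\<Union>c\<in>apex_vertices a. pyramid a c)"
  proof (cases "x \<in> central_cube a")
    case False
    then obtain j where j: "\<bar>x$j\<bar> > 5*a/24" unfolding central_cube_def by (auto simp: not_le)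
    define s :: real where "s = (if x$j \<ge> 0 then 1 else -1)"
    have s: "\<bar>s\<bar> = 1" "s \<in> {-1,1}" by (auto simp: s_def)
    define y where "y = sig j s x"
    have y: "y \<in> Hp a" unfolding y_def by (rule Hp_sig[OF s(1) x])
    have "y$1 = \<bar>x$j\<bar>" by (simp add: y_def s_def tr_def)
    then have "y \<in> pyramid a (pt3 (5*a/16) 0 0)" using pyr1[OF a y] j by simp
    then have "sig j s y \<in> sig j s ` pyramid a (pt3 (5*a/16) 0 0)" by blast
    then have "x \<in> pyramid a (sig j s (pt3 (5*a/16) 0 0))"
      using pyr_sig[OF a s(1)] sig_sig[OF s(1)] unfolding y_def by auto
    then show ?thesis using sig_c1[OF s(2)] by blast
  qed simp
qed

lemma union_sub_tetrakis:
  assumes a: "a > 0"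
  shows "central_cube a \<union> (\<Union>c\<in>apex_vertices a. pyramid a c) \<subseteq> tetrakis a"
proof -
  have "central_cube a \<subseteq> tetrakis a"
    using cube_sub_hull[OF a] hull_mono[of "cube_vertices a" "cube_vertices a \<union> apex_vertices a" convex]
    unfolding tetrakis_def by blast
  moreover have "pyramid a c \<subseteq> tetrakis a" if "c \<in> apex_vertices a" for c
    unfolding pyramid_def tetrakis_def by (rule hull_mono) (use that in auto)
  ultimately show ?thesis by blast
qed

lemma main_eqs:
  assumes a: "a > 0"
  shows "voronoi_cell (L2 a) 0 = tetrakis a" "tetrakis a = Hp a"
    "tetrakis a = central_cube a \<union> (\<Union>c\<in>apex_vertices a. pyramid a c)"
  using cell_sub_Hp[OF a] Hp_sub_union[OF a] union_sub_tetrakis[OF a] tetrakis_sub_cell[of a]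
  by blast+

lemma cell_transl:
  assumes P: "\<And>q. q \<in> P \<longleftrightarrow> q - p \<in> P"
  shows "voronoi_cell P p = (\<lambda>x. p + x) ` voronoi_cell P 0"
proof -
  have "x \<in> voronoi_cell P p \<longleftrightarrow> x - p \<in> voronoi_cell P 0" for x
  proof -
    have "x \<in> voronoi_cell P p \<longleftrightarrow> (\<forall>q\<in>P. dist (x-p) 0 \<le> dist (x-p) (q-p))"
      unfolding voronoi_cell_def by (simp add: dist_norm)
    also have "\<dots> \<longleftrightarrow> (\<forall>q'\<in>P. dist (x-p) 0 \<le> dist (x-p) q')"
    proof
      assume h: "\<forall>q\<in>P. dist (x-p) 0 \<le> dist (x-p) (q-p)"
      show "\<forall>q'\<in>P. dist (x-p) 0 \<le> dist (x-p) q'"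
      proof
        fix q' assume "q' \<in> P"
        then have "q' + p \<in> P" using P[of "q'+p"] by simp
        then show "dist (x-p) 0 \<le> dist (x-p) q'" using h by fastforce
      qed
    next
      assume h: "\<forall>q'\<in>P. dist (x-p) 0 \<le> dist (x-p) q'"
      show "\<forall>q\<in>P. dist (x-p) 0 \<le> dist (x-p) (q-p)"
        using h P by blast
    qed
    finally show ?thesis unfolding voronoi_cell_def by simp
  qed
  then show ?thesis
    by (auto simp: image_iff) (metis add_diff_cancel_left' diff_add_cancel add.commute)
qed

lemma L2_transl:
  assumes p: "p \<in> cubic_lattice a \<union> shifted_lattice a"
  shows "q \<in> L2 a \<longleftrightarrow> q - p \<in> L2 a"
proof -
  obtain v1 v2 v3 where pv: "p = a *\<^sub>R pt3 v1 v2 v3"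
    and v: "(II v1 \<and> II v2 \<and> II v3) \<or> (HH v1 \<and> HH v2 \<and> HH v3)"
    using p unfolding cubic_char shifted_char by blast
  show ?thesis
  proof
    assume "q \<in> L2 a"
    then obtain u1 u2 u3 where q: "q = a *\<^sub>R pt3 u1 u2 u3" "TT u1 u2 u3" unfolding L2_char by blast
    have "q - p = a *\<^sub>R pt3 (u1-v1) (u2-v2) (u3-v3)" by (simp add: q pv algebra_simps)
    then show "q - p \<in> L2 a" unfolding L2_char using TT_shift(2)[OF v q(2)] by blast
  next
    assume "q - p \<in> L2 a"
    then obtain u1 u2 u3 where q: "q - p = a *\<^sub>R pt3 u1 u2 u3" "TT u1 u2 u3" unfolding L2_char by blast
    have "q = a *\<^sub>R pt3 (u1+v1) (u2+v2) (u3+v3)" using q(1) unfolding pv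
      by (simp add: algebra_simps eq_diff_eq)
    then show "q \<in> L2 a" unfolding L2_char using TT_shift(1)[OF v q(2)] by blast
  qed
qed


definition cn :: "3 \<Rightarrow> real \<Rightarrow> (real^3) set" where
  "cn j s = {x. \<forall>i. \<bar>x$i\<bar> \<le> s * x$j}"

lemma closed_cn: "closed (cn j s)"
proof -
  have "cn j s = (\<Inter>i. {x. \<bar>x$i\<bar> \<le> s * x$j})" unfolding cn_def by auto
  moreover have "closed {x::real^3. \<bar>x$i\<bar> \<le> s * x$j}" for i
    by (intro closed_Collect_le continuous_intros)
  ultimately show ?thesis by auto
qed

lemma sig_cn: assumes s: "\<bar>s\<bar> = 1" shows "sig j s x \<in> cn 1 1 \<longleftrightarrow> x \<in> cn j s"
proof -
  have "sig j s x \<in> cn 1 1 \<longleftrightarrow> (\<forall>i. \<bar>x $ tr j i\<bar> \<le> s * x$j)"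
    unfolding cn_def using s by (simp add: abs_mult tr_def)
  also have "\<dots> \<longleftrightarrow> (\<forall>i. \<bar>x $ i\<bar> \<le> s * x$j)" by (metis tr_tr)
  finally show ?thesis unfolding cn_def by simp
qed

lemma cn_cover: "\<exists>j s. s \<in> {-1,1} \<and> x \<in> cn j s"
proof -
  obtain j where j: "\<forall>i. \<bar>x$i\<bar> \<le> \<bar>x$j\<bar>"
  proof -
    have "(\<bar>x$2\<bar> \<le> \<bar>x$1\<bar> \<and> \<bar>x$3\<bar> \<le> \<bar>x$1\<bar>) \<or> (\<bar>x$1\<bar> \<le> \<bar>x$2\<bar> \<and> \<bar>x$3\<bar> \<le> \<bar>x$2\<bar>)
       \<or> (\<bar>x$1\<bar> \<le> \<bar>x$3\<bar> \<and> \<bar>x$2\<bar> \<le> \<bar>x$3\<bar>)" by linarith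
    then have "\<exists>j. \<forall>i. \<bar>x$i\<bar> \<le> \<bar>x$j\<bar>"
    proof (elim disjE)
      assume "\<bar>x$2\<bar> \<le> \<bar>x$1\<bar> \<and> \<bar>x$3\<bar> \<le> \<bar>x$1\<bar>" then show ?thesis by (intro exI[of _ 1]) (simp add: forall_3)
    next
      assume "\<bar>x$1\<bar> \<le> \<bar>x$2\<bar> \<and> \<bar>x$3\<bar> \<le> \<bar>x$2\<bar>" then show ?thesis by (intro exI[of _ 2]) (simp add: forall_3)
    next
      assume "\<bar>x$1\<bar> \<le> \<bar>x$3\<bar> \<and> \<bar>x$2\<bar> \<le> \<bar>x$3\<bar>" then show ?thesis by (intro exI[of _ 3]) (simp add: forall_3)
    qed
    then show ?thesis using that by blast
  qed
  define s :: real where "s = (if x$j \<ge> 0 then 1 else -1)"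
  have "s * x$j = \<bar>x$j\<bar>" by (simp add: s_def)
  then have "x \<in> cn j s" using j unfolding cn_def by simp
  then show ?thesis by (intro exI[of _ j] exI[of _ s]) (auto simp: s_def)
qed

lemma cn_int_neg:
  assumes s: "s \<in> {-1,1}" "s' \<in> {-1,1}" and ne: "(j,s) \<noteq> (j',s')"
  shows "negligible (cn j s \<inter> cn j' s')"
proof -
  define w :: "real^3" where "w = axis j s - axis j' s'"
  have "w \<noteq> 0"
  proof
    assume "w = 0"
    then have "w $ j = 0" by simp
    then show False using s ne unfolding w_def by (auto simp: axis_def split: if_splits)
  qed
  then have "negligible {x. w \<bullet> x = 0}" by (intro negligible_hyperplane) simp
  moreover have "cn j s \<inter> cn j' s' \<subseteq> {x. w \<bullet> x = 0}"
  proof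
    fix x assume x: "x \<in> cn j s \<inter> cn j' s'"
    then have "\<bar>x$j'\<bar> \<le> s * x$j" "\<bar>x$j\<bar> \<le> s' * x$j'" unfolding cn_def by auto
    moreover have "s * x$j \<le> \<bar>x$j\<bar>" "s' * x$j' \<le> \<bar>x$j'\<bar>" using s by auto
    ultimately have "s * x$j = s' * x$j'" by linarith
    then show "x \<in> {x. w \<bullet> x = 0}" by (simp add: w_def inner_diff_left inner_axis' mult.commute)
  qed
  ultimately show ?thesis by (rule negligible_subset)
qed

lemma six:
  assumes S: "compact S" and inv: "\<And>j s x. \<bar>s\<bar> = 1 \<Longrightarrow> x \<in> S \<Longrightarrow> sig j s x \<in> S"
  shows "measure lebesgue S = 6 * measure lebesgue (S \<inter> cn 1 1)"
proof -
  define I where "I = (UNIV :: 3 set) \<times> {1::real, -1}"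
  define f where "f = (\<lambda>(j,s). S \<inter> cn j s)"
  have fin: "finite I" unfolding I_def by simp
  have meas: "f p \<in> lmeasurable" for p
    unfolding f_def by (cases p) (auto intro!: lmeasurable_compact compact_Int_closed closed_cn S)
  have US: "\<Union>(f ` I) = S" unfolding f_def I_def using cn_cover by fastforce
  have pw: "pairwise (\<lambda>p q. negligible (f p \<inter> f q)) I"
    unfolding pairwise_def
  proof (intro ballI impI)
    fix p q assume pq: "p \<in> I" "q \<in> I" "p \<noteq> q"
    obtain j s j' s' where p: "p = (j,s)" and q: "q = (j',s')" by (cases p, cases q)
    have ss: "s \<in> {-1,1}" "s' \<in> {-1,1}" using pq p q unfolding I_def by auto
    have "f p \<inter> f q \<subseteq> cn j s \<inter> cn j' s'" unfolding f_def p q by auto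
    then show "negligible (f p \<inter> f q)"
      using cn_int_neg[OF ss] pq(3) p q by (blast intro: negligible_subset)
  qed
  have eq: "f p = sig j s ` (S \<inter> cn 1 1)" if "p = (j,s)" "p \<in> I" for p j s
  proof -
    have s: "\<bar>s\<bar> = 1" using that unfolding I_def by auto
    show ?thesis
    proof (intro set_eqI iffI)
      fix x assume "x \<in> f p"
      then have x: "x \<in> S" "x \<in> cn j s" using that unfolding f_def by auto
      have "sig j s x \<in> S \<inter> cn 1 1" using inv[OF s x(1)] sig_cn[OF s] sig_sig[OF s] x(2) by simp
      then show "x \<in> sig j s ` (S \<inter> cn 1 1)" using sig_sig[OF s, of j x] by (metis image_eqI)
    next
      fix x assume "x \<in> sig j s ` (S \<inter> cn 1 1)"
      then obtain y where y: "y \<in> S" "y \<in> cn 1 1" "x = sig j s y" by blast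
      have "x \<in> S" using inv[OF s y(1)] y(3) by simp
      moreover have "x \<in> cn j s" using sig_cn[OF s, of j x] y sig_sig[OF s] by simp
      ultimately show "x \<in> f p" using that unfolding f_def by simp
    qed
  qed
  have m: "measure lebesgue (f p) = measure lebesgue (S \<inter> cn 1 1)" if "p \<in> I" for p
  proof -
    obtain j s where p: "p = (j,s)" by (cases p)
    have s: "\<bar>s\<bar> = 1" using that p unfolding I_def by auto
    have "S \<inter> cn 1 1 \<in> lmeasurable" using meas[of "(1,1)"] unfolding f_def by simp
    then show ?thesis unfolding eq[OF p that] by (rule measure_orthogonal_image[OF orth_sig[OF s]])
  qed
  have "measure lebesgue S = (\<Sum>p\<in>I. measure lebesgue (f p))"
    using measure_negligible_finite_Union_image[OF fin meas pw] US by simp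
  also have "\<dots> = (\<Sum>p\<in>I. measure lebesgue (S \<inter> cn 1 1))" using m by simp
  also have "\<dots> = 6 * measure lebesgue (S \<inter> cn 1 1)" unfolding I_def by (simp add: card_cartesian_product)
  finally show ?thesis .
qed

lemma prod_3: "prod f (UNIV::3 set) = f 1 * f 2 * f 3"
  unfolding UNIV_3 by (simp add: ac_simps)

definition Bx :: "(real^3) set" where "Bx = {x. \<forall>i. \<bar>x$i\<bar> \<le> 1}"

lemma Bx_cbox: "Bx = cbox (-1) 1"
  unfolding Bx_def by (auto simp: mem_box_cart abs_le_iff)

lemma measure_Bx: "measure lebesgue Bx = 8"
proof -
  have "measure lebesgue Bx = measure lborel (cbox (-1) (1::real^3))"
    unfolding Bx_cbox by (metis cbox_borel measure_completion sets_lborel)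
  also have "\<dots> = 8"
  proof -
    have "(0::real^3) \<in> cbox (-1) 1" by (simp add: mem_box_cart)
    then have "cbox (-1) (1::real^3) \<noteq> {}" by blast
    then show ?thesis by (subst content_cbox_cart) (auto simp: prod_3)
  qed
  finally show ?thesis .
qed

lemma measure_Q: "measure lebesgue (Bx \<inter> cn 1 1) = 4/3"
proof -
  have "measure lebesgue Bx = 6 * measure lebesgue (Bx \<inter> cn 1 1)"
  proof (rule six)
    show "compact Bx" unfolding Bx_cbox by (rule compact_cbox)
  qed (auto simp: Bx_def abs_mult)
  then show ?thesis using measure_Bx by simp
qed

lemma compact_Hp: assumes a: "a > 0" shows "compact (Hp a)"
proof -
  have "Hp a = (\<Inter>p\<in>{p. fst p \<noteq> snd p}. {x. 2*\<bar>x$(fst p)\<bar> + \<bar>x$(snd p)\<bar> \<le> 5*a/8})"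
    unfolding Hp_def by auto
  moreover have "closed {x::real^3. 2*\<bar>x$i\<bar> + \<bar>x$j\<bar> \<le> 5*a/8}" for i j
    by (intro closed_Collect_le continuous_intros)
  ultimately have cl: "closed (Hp a)" by auto
  have "Hp a \<subseteq> cbox (-(\<chi> i. 5*a/16)) (\<chi> i. 5*a/16)"
  proof
    fix x assume "x \<in> Hp a"
    then have "\<forall>i j. i \<noteq> j \<longrightarrow> 2*\<bar>x$i\<bar> + \<bar>x$j\<bar> \<le> 5*a/8" unfolding Hp_def by simp
    then have "2*\<bar>x$1\<bar> + \<bar>x$2\<bar> \<le> 5*a/8" "2*\<bar>x$2\<bar> + \<bar>x$1\<bar> \<le> 5*a/8" "2*\<bar>x$3\<bar> + \<bar>x$1\<bar> \<le> 5*a/8"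
      by (simp_all add: forall_3)
    then show "x \<in> cbox (-(\<chi> i. 5*a/16)) (\<chi> i. 5*a/16)"
      by (simp add: mem_box_cart forall_3) arith
  qed
  then have "bounded (Hp a)" by (rule bounded_subset[OF bounded_cbox])
  with cl show ?thesis by (simp add: compact_eq_bounded_closed)
qed

lemma DA_char:
  fixes b :: real assumes b: "b > 0"
  shows "(\<lambda>y. \<chi> k. b * y$k) ` (Bx \<inter> cn 1 1) = {x. (\<forall>i. \<bar>x$i\<bar> \<le> x$1) \<and> x$1 \<le> b}"
proof (intro set_eqI iffI)
  fix x assume "x \<in> (\<lambda>y. \<chi> k. b * y$k) ` (Bx \<inter> cn 1 1)"
  then obtain y where y: "\<forall>i. \<bar>y$i\<bar> \<le> 1" "\<forall>i. \<bar>y$i\<bar> \<le> y$1" and x: "x = (\<chi> k. b * y$k)"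
    unfolding Bx_def cn_def by auto
  have "\<bar>x$i\<bar> \<le> x$1" for i using y(2) b by (simp add: x abs_mult)
  moreover have "x$1 \<le> b" using y(1)[rule_format, of 1] b by (simp add: x abs_le_iff)
  ultimately show "x \<in> {x. (\<forall>i. \<bar>x$i\<bar> \<le> x$1) \<and> x$1 \<le> b}" by simp
next
  fix x :: "real^3" assume "x \<in> {x. (\<forall>i. \<bar>x$i\<bar> \<le> x$1) \<and> x$1 \<le> b}"
  then have x: "\<forall>i. \<bar>x$i\<bar> \<le> x$1" "x$1 \<le> b" by auto
  define y :: "real^3" where "y = (\<chi> k. x$k / b)"
  have "x = (\<chi> k. b * y$k)" using b by (simp add: y_def vec_eq_iff)
  moreover have "y \<in> Bx"
    unfolding Bx_def y_def using x b by (auto simp: abs_divide divide_le_eq intro: order_trans)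
  moreover have "y \<in> cn 1 1"
    unfolding cn_def y_def using x b by (auto simp: abs_divide divide_le_eq)
  ultimately show "x \<in> (\<lambda>y. \<chi> k. b * y$k) ` (Bx \<inter> cn 1 1)" by blast
qed

definition mB :: "real \<Rightarrow> 3 \<Rightarrow> real" where "mB b k = (if k = 1 then -b/2 else b)"

lemma mB_simps [simp]: "mB b 1 = -b/2" "mB b 2 = b" "mB b 3 = b"
  by (simp_all add: mB_def)

lemma DB_char:
  fixes b :: real assumes b: "b > 0"
  shows "(\<lambda>y. pt3 (3*b/2) 0 0 + (\<chi> k. mB b k * y$k)) ` (Bx \<inter> cn 1 1)
     = {x. b \<le> x$1 \<and> \<bar>x$2\<bar> \<le> 3*b - 2*x$1 \<and> \<bar>x$3\<bar> \<le> 3*b - 2*x$1}"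
proof (intro set_eqI iffI)
  fix x assume "x \<in> (\<lambda>y. pt3 (3*b/2) 0 0 + (\<chi> k. mB b k * y$k)) ` (Bx \<inter> cn 1 1)"
  then obtain y where y: "\<forall>i. \<bar>y$i\<bar> \<le> 1" "\<forall>i. \<bar>y$i\<bar> \<le> y$1" and x: "x = pt3 (3*b/2) 0 0 + (\<chi> k. mB b k * y$k)"
    unfolding Bx_def cn_def by auto
  have y1: "y$1 \<le> 1" "\<bar>y$2\<bar> \<le> y$1" "\<bar>y$3\<bar> \<le> y$1" using y by (auto simp: abs_le_iff)
  have x1: "x$1 = 3*b/2 - (b * y$1)/2" "x$2 = b * y$2" "x$3 = b * y$3" by (simp_all add: x)
  have h: "b * \<bar>y$2\<bar> \<le> b * y$1" "b * \<bar>y$3\<bar> \<le> b * y$1" "b * y$1 \<le> b * 1"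
    using y1 b by (intro mult_left_mono; simp)+
  have ab: "\<bar>x$2\<bar> = b * \<bar>y$2\<bar>" "\<bar>x$3\<bar> = b * \<bar>y$3\<bar>" using b by (simp_all add: x1 abs_mult)
  show "x \<in> {x. b \<le> x$1 \<and> \<bar>x$2\<bar> \<le> 3*b - 2*x$1 \<and> \<bar>x$3\<bar> \<le> 3*b - 2*x$1}"
    unfolding mem_Collect_eq ab x1(1) using h
    apply (intro conjI)
    subgoal by (simp add: field_simps)
    subgoal by (simp add: field_simps)
    subgoal by (simp add: field_simps)
    done
next
  fix x :: "real^3" assume "x \<in> {x. b \<le> x$1 \<and> \<bar>x$2\<bar> \<le> 3*b - 2*x$1 \<and> \<bar>x$3\<bar> \<le> 3*b - 2*x$1}"
  then have x: "b \<le> x$1" "\<bar>x$2\<bar> \<le> 3*b - 2*x$1" "\<bar>x$3\<bar> \<le> 3*b - 2*x$1" by auto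
  define y where "y = pt3 ((3*b - 2*x$1)/b) (x$2/b) (x$3/b)"
  have "x = pt3 (3*b/2) 0 0 + (\<chi> k. mB b k * y$k)"
    using b by (simp add: y_def vec_eq_iff forall_3 field_simps)
  moreover have "y \<in> Bx"
    unfolding Bx_def y_def using x b by (auto simp: forall_3 abs_divide divide_le_eq le_divide_eq)
  moreover have "y \<in> cn 1 1"
    unfolding cn_def y_def using x b by (auto simp: forall_3 abs_divide divide_le_eq le_divide_eq)
  ultimately show "x \<in> (\<lambda>y. pt3 (3*b/2) 0 0 + (\<chi> k. mB b k * y$k)) ` (Bx \<inter> cn 1 1)" by blast
qed

lemma K1_char:
  assumes a: "a > 0"
  shows "Hp a \<inter> cn 1 1 = {x. (\<forall>i. \<bar>x$i\<bar> \<le> x$1) \<and> x$1 \<le> 5*a/24}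
     \<union> {x. 5*a/24 \<le> x$1 \<and> \<bar>x$2\<bar> \<le> 3*(5*a/24) - 2*x$1 \<and> \<bar>x$3\<bar> \<le> 3*(5*a/24) - 2*x$1}"
proof -
  have "x \<in> Hp a \<inter> cn 1 1 \<longleftrightarrow> x \<in> {x. (\<forall>i. \<bar>x$i\<bar> \<le> x$1) \<and> x$1 \<le> 5*a/24}
     \<union> {x. 5*a/24 \<le> x$1 \<and> \<bar>x$2\<bar> \<le> 3*(5*a/24) - 2*x$1 \<and> \<bar>x$3\<bar> \<le> 3*(5*a/24) - 2*x$1}" for x :: "real^3"
    unfolding Hp_def cn_def using a by (simp add: forall_3) arith
  then show ?thesis by blast
qed

lemma measure_Hp:
  assumes a: "a > 0"
  shows "measure lebesgue (Hp a) = 125 / 1152 * a ^ 3"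
proof -
  define b where "b = 5*a/24"
  have b: "b > 0" using a by (simp add: b_def)
  let ?Q = "Bx \<inter> cn 1 1"
  have Qm: "?Q \<in> lmeasurable"
    by (intro lmeasurable_compact compact_Int_closed closed_cn) (simp add: Bx_cbox)
  define A where "A = (\<lambda>y. \<chi> k. b * y$k) ` ?Q"
  define B where "B = (+) (pt3 (3*b/2) 0 0) ` ((\<lambda>y. \<chi> k. mB b k * y$k) ` ?Q)"
  have Bimg: "B = (\<lambda>y. pt3 (3*b/2) 0 0 + (\<chi> k. mB b k * y$k)) ` ?Q"
    unfolding B_def by (simp add: image_image)
  have K: "Hp a \<inter> cn 1 1 = A \<union> B"
    unfolding A_def Bimg DA_char[OF b] DB_char[OF b] by (simp only: K1_char[OF a] b_def)
  have Am: "A \<in> lmeasurable" unfolding A_def by (rule measurable_stretch[OF Qm])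
  have Bm: "B \<in> lmeasurable" unfolding B_def by (intro measurable_translation measurable_stretch[OF Qm])
  have mA: "measure lebesgue A = b^3 * (4/3)"
    unfolding A_def using measure_stretch[OF Qm, of "\<lambda>k. b"] b
    by (simp add: measure_Q prod_3 abs_mult power3_eq_cube)
  have mB: "measure lebesgue B = b^3/2 * (4/3)"
    unfolding B_def measure_translation using measure_stretch[OF Qm, of "mB b"] b
    by (simp add: measure_Q prod_3 abs_mult power3_eq_cube)
  have "A \<inter> B \<subseteq> {x. axis 1 1 \<bullet> x = b}"
    unfolding A_def Bimg DA_char[OF b] DB_char[OF b] by (auto simp: inner_axis')
  then have "negligible (A \<inter> B)"
    by (rule negligible_subset[OF negligible_hyperplane, rotated]) (simp add: axis_eq_0_iff)
  then have "measure lebesgue (A \<inter> B) = 0" by (rule negligible_imp_measure0)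
  then have mK: "measure lebesgue (Hp a \<inter> cn 1 1) = 2 * b^3"
    unfolding K using measure_Un3[OF Am Bm] mA mB by simp
  have "measure lebesgue (Hp a) = 6 * measure lebesgue (Hp a \<inter> cn 1 1)"
    by (rule six[OF compact_Hp[OF a]]) (rule Hp_sig)
  then show ?thesis using mK by (simp add: b_def power3_eq_cube)
qed

theorem mainTheorem3:
  fixes a :: real
  assumes "a > 0"
  shows "voronoi_cell (L2 a) 0 = tetrakis a
    \<and> tetrakis a = central_cube a \<union> (\<Union>c\<in>apex_vertices a. pyramid a c)
    \<and> measure lebesgue (tetrakis a) = 125 / 1152 * a ^ 3
    \<and> (\<forall>p \<in> cubic_lattice a \<union> shifted_lattice a.
          voronoi_cell (L2 a) p = (\<lambda>x. p + x) ` tetrakis a)"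
proof (intro conjI ballI)
  show "voronoi_cell (L2 a) 0 = tetrakis a" by (rule main_eqs(1)[OF assms])
  show "tetrakis a = central_cube a \<union> (\<Union>c\<in>apex_vertices a. pyramid a c)" by (rule main_eqs(3)[OF assms])
  show "measure lebesgue (tetrakis a) = 125 / 1152 * a ^ 3"
    unfolding main_eqs(2)[OF assms] by (rule measure_Hp[OF assms])
  fix p assume p: "p \<in> cubic_lattice a \<union> shifted_lattice a"
  have "voronoi_cell (L2 a) p = (\<lambda>x. p + x) ` voronoi_cell (L2 a) 0"
    by (rule cell_transl) (rule L2_transl[OF p])
  then show "voronoi_cell (L2 a) p = (\<lambda>x. p + x) ` tetrakis a"
    using main_eqs(1)[OF assms] by simp
qed

end
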